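(* Let $p\geq 2$ be an integer, $n=2^p-1$, and let $s$ be an integer with $s\geq 3\cdot 2^{p-2}$. Then there exists a perfect code in the graph $\Gamma_n(1^s)$.
   Context: The $n$-cube $Q_n$ is the graph whose vertex set is the set $\mathbb{B}_n$ of binary strings of length $n$, two strings being adjacent if they differ in exactly one position. For an integer $s\ge 1$, $\Gamma_n(1^s)$ is the subgraph of $Q_n$ induced by the binary strings of length $n$ that do not contain $1^s$ (the string of $s$ consecutive 1's) as a substring, where $\bm{f}$ is a substring of $\bm{s}$ if $\bm{s}=\bm{x}\bm{f}\bm{y}$ for some (possibly empty) strings $\bm{x},\bm{y}$. A perfect code in a graph $G$ is a set $C$ of vertices such that every vertex of $G$ lies in the closed neighbourhood $N[c]=\{v: d_G(c,v)\le 1\}$ of exactly one vertex $c\in C$ (equivalently, $C$ is a dominating set of $G$ and any two distinct elements of $C$ are at distance at least $3$ in $G$). *)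

theory Defs
  imports Main
begin

text \<open>Binary strings are lists of booleans (True = 1, False = 0).\<close>

definition is_substring :: "bool list \<Rightarrow> bool list \<Rightarrow> bool" where
  "is_substring f w \<longleftrightarrow> (\<exists>x y. w = x @ f @ y)"

definition hamming :: "bool list \<Rightarrow> bool list \<Rightarrow> nat" where
  "hamming u v = card {i. i < length u \<and> u ! i \<noteq> v ! i}"

definition cube_adj :: "bool list \<Rightarrow> bool list \<Rightarrow> bool" where
  "cube_adj u v \<longleftrightarrow> length u = length v \<and> hamming u v = 1"

definition Gamma_vertices :: "nat \<Rightarrow> nat \<Rightarrow> bool list set" where
  "Gamma_vertices n s = {w. length w = n \<and> \<not> is_substring (replicate s True) w}"

definition closed_nbhd :: "'a set \<Rightarrow> ('a \<Rightarrow> 'a \<Rightarrow> bool) \<Rightarrow> 'a \<Rightarrow> 'a set" where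
  "closed_nbhd V E c = {v \<in> V. v = c \<or> E c v}"

definition perfect_code :: "'a set \<Rightarrow> ('a \<Rightarrow> 'a \<Rightarrow> bool) \<Rightarrow> 'a set \<Rightarrow> bool" where
  "perfect_code V E C \<longleftrightarrow> C \<subseteq> V \<and>
     (\<forall>v \<in> V. \<exists>!c. c \<in> C \<and> v \<in> closed_nbhd V E c)"

end

theory Submission
  imports Defs
begin

unbundle bit_operations_syntax

fun syn_from :: "nat \<Rightarrow> bool list \<Rightarrow> nat" where
  "syn_from k [] = 0"
| "syn_from k (b # w) = (if b then Suc k else 0) XOR syn_from (Suc k) w"

lemma syn_flip:
  "j < length w \<Longrightarrow> syn_from k (w[j := \<not> w!j]) = Suc (k+j) XOR syn_from k w"
proof (induction w arbitrary: k j)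
  case Nil then show ?case by simp
next
  case (Cons b w)
  show ?case
  proof (cases j)
    case 0
    then show ?thesis by (cases b) (simp_all add: xor.assoc[symmetric])
  next
    case (Suc j')
    with Cons show ?thesis by (simp add: xor.left_commute)
  qed
qed

lemma xor_lt: "(x::nat) < 2^p \<Longrightarrow> y < 2^p \<Longrightarrow> x XOR y < 2^p"
  by (metis take_bit_nat_eq_self_iff take_bit_xor)

lemma syn_bound: "k + length w < 2^p \<Longrightarrow> syn_from k w < 2^p"
proof (induction w arbitrary: k)
  case Nil then show ?case by simp
next
  case (Cons b w)
  then have "syn_from (Suc k) w < 2^p" by simp
  moreover have "(if b then Suc k else 0) < (2::nat)^p" using Cons.prems by auto
  ultimately show ?case by (simp add: xor_lt del: of_bool_eq)
qed

lemma syn_par: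
  fixes q1 q2 :: nat
  defines "gf \<equiv> \<lambda>x::nat. bit x q1 \<noteq> bit x q2"
  shows "gf (syn_from k w) = odd (\<Sum>i<length w. if w!i \<and> gf (Suc (k+i)) then 1 else 0 :: nat)"
proof (induction w arbitrary: k)
  case Nil then show ?case by (simp add: gf_def)
next
  case (Cons b w)
  have x: "gf (x XOR y) = (gf x \<noteq> gf y)" for x y by (auto simp: gf_def bit_xor_iff)
  have z: "\<not> gf 0" by (simp add: gf_def)
  show ?case
    using Cons[of "Suc k"]
    by (simp add: sum.lessThan_Suc_shift x z del: sum.lessThan_Suc)
qed

lemma adj_iff:
  "cube_adj u v \<longleftrightarrow> (\<exists>j<length u. v = u[j := \<not> u!j])"
proof
  assume a: "cube_adj u v"
  then have len: "length u = length v" and h: "card {i. i < length u \<and> u ! i \<noteq> v ! i} = 1"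
    by (auto simp: cube_adj_def hamming_def)
  from h obtain j where j: "{i. i < length u \<and> u ! i \<noteq> v ! i} = {j}"
    by (rule card_1_singletonE)
  then have jl: "j < length u" and d: "u!j \<noteq> v!j" by auto
  have "v = u[j := \<not> u!j]"
  proof (rule nth_equalityI)
    show "length v = length (u[j := \<not> u ! j])" using len by simp
    fix i assume "i < length v"
    then show "v ! i = u[j := \<not> u ! j] ! i"
      using j d len by (cases "i = j") (auto simp: set_eq_iff)
  qed
  with jl show "\<exists>j<length u. v = u[j := \<not> u!j]" by blast
next
  assume "\<exists>j<length u. v = u[j := \<not> u!j]"
  then obtain j where jl: "j < length u" and v: "v = u[j := \<not> u!j]" by blast
  have "{i. i < length u \<and> u ! i \<noteq> v ! i} = {j}"
    using jl v by (auto simp: nth_list_update)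
  then show "cube_adj u v" using v by (simp add: cube_adj_def hamming_def)
qed

lemma gf_char:
  assumes p: "p \<ge> 2" and x: "x < 4 * 2^(p-2)"
  shows "(bit (x::nat) (p-1) \<noteq> bit x (p-2)) \<longleftrightarrow> (2^(p-2) \<le> x \<and> x < 3 * 2^(p-2))"
proof -
  define m :: nat where "m = 2^(p-2)"
  have m0: "m > 0" by (simp add: m_def)
  have "p - 1 = Suc (p-2)" using p by simp
  then have pm: "(2::nat)^(p-1) = 2*m" unfolding m_def by simp
  define q where "q = x div m"
  have q4: "q < 4" using x m0 by (simp add: q_def m_def div_less_iff_less_mult)
  have b1: "bit x (p-1) = odd (q div 2)" proof -
    have "x div 2^(p-1) = x div m div 2" using pm by (simp add: div_mult2_eq mult.commute)
    then show ?thesis by (simp add: bit_nat_def q_def)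
  qed
  have b2: "bit x (p-2) = odd q" by (simp add: bit_nat_def q_def m_def)
  have r: "(m \<le> x \<and> x < 3 * m) \<longleftrightarrow> (1 \<le> q \<and> q < 3)"
    using m0 by (simp add: q_def div_less_iff_less_mult less_eq_div_iff_mult_less_eq)
  have "(odd (q div 2) \<noteq> odd q) \<longleftrightarrow> (1 \<le> q \<and> q < 3)"
    proof -
    have "q = 0 \<or> q = 1 \<or> q = 2 \<or> q = 3" using q4 by auto
    then show ?thesis by auto
  qed
  then show ?thesis using b1 b2 r by (simp add: m_def)
qed

lemma window_syn:
  assumes p: "p \<ge> 2" and len: "length w = 4 * 2^(p-2) - 1"
    and s: "s \<ge> 3 * 2^(p-2)" and sub: "is_substring (replicate s True) w"
  shows "syn_from 0 w \<noteq> 2^(p-2)"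
proof
  assume eq: "syn_from 0 w = 2^(p-2)"
  define m :: nat where "m = 2^(p-2)"
  have m0: "m > 0" by (simp add: m_def)
  define n where "n = 4*m - 1"
  from sub obtain x y where w: "w = x @ replicate s True @ y" by (auto simp: is_substring_def)
  have tl: "length x + s \<le> n" using len w by (simp add: n_def m_def)
  have win: "w ! i" if "m - 1 \<le> i" "i < 3*m - 1" for i
  proof -
    have "length x \<le> i" using tl s that by (simp add: n_def m_def)
    moreover have "i < length x + s" using that s by (simp add: m_def)
    ultimately show ?thesis using w by (auto simp: nth_append)
  qed
  define gf where "gf = (\<lambda>x::nat. bit x (p-1) \<noteq> bit x (p-2))"
  have gfc: "gf x \<longleftrightarrow> m \<le> x \<and> x < 3*m" if "x < 4*m" for x
    using gf_char[OF p, of x] that by (simp add: gf_def m_def)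
  have par: "gf (syn_from 0 w) = odd (\<Sum>i<length w. if w!i \<and> gf (Suc (0+i)) then 1 else 0 :: nat)"
    unfolding gf_def by (rule syn_par)
  have "(\<Sum>i<length w. if w!i \<and> gf (Suc (0+i)) then 1 else 0 :: nat)
      = (\<Sum>i<n. if m - 1 \<le> i \<and> i < 3*m - 1 then 1 else 0)"
  proof (rule sum.cong)
    show "{..<length w} = {..<n}" using len by (simp add: n_def m_def)
    fix i assume "i \<in> {..<n}"
    then have "Suc i < 4*m" by (simp add: n_def)
    then have "gf (Suc i) \<longleftrightarrow> m - 1 \<le> i \<and> i < 3*m - 1" using gfc m0 by auto
    then show "(if w!i \<and> gf (Suc (0+i)) then 1 else 0 :: nat) = (if m - 1 \<le> i \<and> i < 3*m - 1 then 1 else 0)"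
      using win by auto
  qed
  also have "\<dots> = card {i\<in>{..<n}. m - 1 \<le> i \<and> i < 3*m - 1}"
    by (simp add: sum.inter_filter[symmetric])
  also have "{i\<in>{..<n}. m - 1 \<le> i \<and> i < 3*m - 1} = {m-1..<3*m-1}"
    by (auto simp: n_def)
  also have "card {m-1..<3*m-1} = 2*m" using m0 by simp
  finally have "\<not> gf (syn_from 0 w)" using par by simp
  moreover have "gf m" using gfc m0 by simp
  ultimately show False using eq by (simp add: m_def)
qed

lemma xor_solve: "(a::nat) XOR b = c \<Longrightarrow> a = c XOR b"
  by (drule sym) (simp add: xor.assoc)

lemma xor_zero_eq: "(a::nat) XOR b = 0 \<Longrightarrow> a = b"
  using xor_solve by fastforce

definition fixer :: "nat \<Rightarrow> bool list \<Rightarrow> bool list" where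
  "fixer m v = (if syn_from 0 v = m then v
     else v[(syn_from 0 v XOR m) - 1 := \<not> v ! ((syn_from 0 v XOR m) - 1)])"

lemma near_code:
  assumes "c = v \<or> cube_adj c v" and "syn_from 0 c = m"
  shows "c = fixer m v"
  using assms(1)
proof
  assume "c = v" then show ?thesis using assms(2) by (simp add: fixer_def)
next
  assume "cube_adj c v"
  then obtain j where j: "j < length c" and v: "v = c[j := \<not> c!j]" unfolding adj_iff by blast
  have c: "c = v[j := \<not> v!j]" using v j by simp
  have jv: "j < length v" using v j by simp
  have "syn_from 0 c = Suc j XOR syn_from 0 v" using c syn_flip[OF jv, of 0] by simp
  with assms(2) have e: "Suc j = m XOR syn_from 0 v" using xor_solve by metis
  have ne: "syn_from 0 v \<noteq> m"
  proof
    assume "syn_from 0 v = m"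
    then have "Suc j = 0" using e by simp
    then show False by simp
  qed
  have x: "syn_from 0 v XOR m = Suc j" using e by (simp add: xor.commute)
  have "fixer m v = v[j := \<not> v!j]" using ne unfolding fixer_def x by simp
  then show ?thesis using c by simp
qed

theorem corollary3:
  fixes p s :: nat
  assumes "p \<ge> 2"
    and "s \<ge> 3 * 2 ^ (p - 2)"
  shows "\<exists>C. perfect_code (Gamma_vertices (2 ^ p - 1) s) cube_adj C"
proof -
  define m :: nat where "m = 2^(p-2)"
  have pp: "p = Suc (Suc (p-2))" using assms(1) by simp
  have pw: "(2::nat)^p = 4 * m" unfolding m_def by (subst pp) simp
  have m0: "m > 0" by (simp add: m_def)
  define n where "n = 4*m - 1"
  have nn: "2^p - 1 = n" using pw by (simp add: n_def)
  define V where "V = Gamma_vertices n s"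
  define C where "C = {w. length w = n \<and> syn_from 0 w = m}"
  have CV: "C \<subseteq> V"
  proof
    fix w assume "w \<in> C"
    then have l: "length w = n" and sy: "syn_from 0 w = m" by (auto simp: C_def)
    have "\<not> is_substring (replicate s True) w"
      using window_syn[OF assms(1) _ assms(2)] l sy by (auto simp: n_def m_def)
    then show "w \<in> V" using l by (simp add: V_def Gamma_vertices_def)
  qed
  have "\<forall>v\<in>V. \<exists>!c. c \<in> C \<and> v \<in> closed_nbhd V cube_adj c"
  proof
    fix v assume vV: "v \<in> V"
    then have lv: "length v = n" by (simp add: V_def Gamma_vertices_def)
    define \<sigma> where "\<sigma> = syn_from 0 v"
    have sb: "\<sigma> < 2^p" unfolding \<sigma>_def by (rule syn_bound) (use m0 in \<open>simp add: lv pw n_def\<close>)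
    have mb: "m < 2^p" using pw m_def by simp
    show "\<exists>!c. c \<in> C \<and> v \<in> closed_nbhd V cube_adj c"
    proof (rule ex1I)
      show "fixer m v \<in> C \<and> v \<in> closed_nbhd V cube_adj (fixer m v)"
      proof (cases "\<sigma> = m")
        case True
        then show ?thesis using vV lv by (simp add: fixer_def C_def closed_nbhd_def \<sigma>_def)
      next
        case False
        define x where "x = \<sigma> XOR m"
        have x0: "x \<noteq> 0" using False xor_zero_eq x_def by blast
        have xb: "x < 2^p" using xor_lt[OF sb mb] x_def by simp
        define j where "j = x - 1"
        have jl: "j < length v" using x0 xb lv pw by (simp add: j_def n_def)
        have sj: "Suc j = x" using x0 j_def by simp
        have f: "fixer m v = v[j := \<not> v!j]" using False
          by (simp add: fixer_def \<sigma>_def[symmetric] x_def[symmetric] j_def)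
        have xx: "(\<sigma> XOR m) XOR \<sigma> = m" by (metis xor.commute xor_solve)
        have "syn_from 0 (fixer m v) = m"
          using xx f syn_flip[OF jl, of 0] sj x_def
          by (simp add: \<sigma>_def[symmetric] xor.assoc[symmetric])
        moreover have "cube_adj (fixer m v) v"
          using f jl by (auto simp: adj_iff)
        ultimately show ?thesis using f lv vV by (simp add: C_def closed_nbhd_def)
      qed
    next
      fix c assume "c \<in> C \<and> v \<in> closed_nbhd V cube_adj c"
      then show "c = fixer m v"
        by (intro near_code) (auto simp: C_def closed_nbhd_def)
    qed
  qed
  then have "perfect_code V cube_adj C" using CV by (simp add: perfect_code_def)
  then show ?thesis using nn V_def by auto
qed

end
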